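(* Let $n$ be a composite integer and let $\ell$ be the smallest prime factor of $n$. Then $C_q(n)=0$ if and only if $(q,n)=(2,9)$. If $(q,n)\neq(2,9)$, then $C_q(n)=1$ if and only if $(q,n)=(2,4)$, and moreover $$C_q(n)\ge \frac{q^n}{(2n)^{\ell}}.$$
   Context: $\mathbb{F}_q$ is the finite field with $q$ elements. A finite ring $S$ is a Carmichael ring if $S$ is not a field and $a^{|S|}=a$ for every $a\in S$. A polynomial $f\in\mathbb{F}_q[t]$ is a Carmichael polynomial if $\mathbb{F}_q[t]/(f)$ is a Carmichael ring. $C_q(n)$ denotes the number of monic Carmichael polynomials in $\mathbb{F}_q[t]$ of degree $n$. *)

theory Defs
  imports "HOL-Computational_Algebra.Polynomial" "HOL-Computational_Algebra.Primes"
begin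

text \<open>The quotient ring F_q[t]/(f) is modelled by residues modulo f.
  Its elements are represented by the polynomials r with r mod f = r.\<close>

definition quot_card :: "'a::field poly \<Rightarrow> nat" where
  "quot_card f = card {r :: 'a poly. r mod f = r}"

text \<open>F[t]/(f) is a field: it is a nonzero ring (1 is not 0 mod f), and every
  nonzero residue class has an inverse.\<close>

definition quot_is_field :: "'a::field poly \<Rightarrow> bool" where
  "quot_is_field f \<longleftrightarrow> \<not> f dvd 1 \<and> (\<forall>g. \<not> f dvd g \<longrightarrow> (\<exists>h. f dvd g * h - 1))"

definition carmichael_poly :: "'a::field poly \<Rightarrow> bool" where
  "carmichael_poly f \<longleftrightarrow> \<not> quot_is_field f \<and> (\<forall>g. f dvd (g ^ quot_card f - g))"

definition carmichael_count :: "'a::{finite,field} itself \<Rightarrow> nat \<Rightarrow> nat" where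
  "carmichael_count _ n =
     card {f :: 'a poly. lead_coeff f = 1 \<and> degree f = n \<and> carmichael_poly f}"

end

theory Submission
  imports Defs "HOL-Computational_Algebra.Polynomial_Factorial" "HOL-Algebra.Multiplicative_Group" "HOL-Algebra.Sylow"
begin

definition Bset :: "nat \<Rightarrow> 'a::zero poly set" where
  "Bset n = {r. r = 0 \<or> degree r < n}"

lemma Bset_0: "Bset 0 = {0}" by (auto simp: Bset_def)

lemma Bset_Suc: "Bset (Suc n) = (\<lambda>(a,h). pCons a h) ` (UNIV \<times> Bset n)"
proof (intro equalityI subsetI)
  fix r :: "'a poly" assume "r \<in> Bset (Suc n)"
  then show "r \<in> (\<lambda>(a,h). pCons a h) ` (UNIV \<times> Bset n)"
  proof (cases r rule: pCons_cases)
    case (pCons a h)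
    with \<open>r \<in> Bset (Suc n)\<close> have "h \<in> Bset n"
      by (cases "h = 0") (auto simp: Bset_def)
    then show ?thesis using pCons by auto
  qed
next
  fix r :: "'a poly" assume "r \<in> (\<lambda>(a,h). pCons a h) ` (UNIV \<times> Bset n)"
  then obtain a h where "r = pCons a h" "h \<in> Bset n" by auto
  then show "r \<in> Bset (Suc n)"
    by (cases "h = 0") (auto simp: Bset_def)
qed

lemma card_Bset: "finite (Bset n :: 'a::{finite,zero} poly set) \<and> card (Bset n :: 'a poly set) = card (UNIV :: 'a set)^n"
proof (induction n)
  case 0 then show ?case by (simp add: Bset_0)
next
  case (Suc n)
  have inj: "inj_on (\<lambda>(a,h). pCons a h) (UNIV \<times> Bset n :: ('a \<times> 'a poly) set)"
    by (auto simp: inj_on_def)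
  have "card (Bset (Suc n) :: 'a poly set) = card (UNIV \<times> Bset n :: ('a \<times> 'a poly) set)"
    unfolding Bset_Suc by (rule card_image[OF inj])
  also have "\<dots> = card (UNIV :: 'a set) * card (UNIV :: 'a set)^n" using Suc by (simp add: card_cartesian_product)
  finally show ?case using Suc by (simp add: Bset_Suc)
qed

lemma mod_self_iff:
  fixes f r :: "'a::field poly"
  assumes "f \<noteq> 0"
  shows "r mod f = r \<longleftrightarrow> r \<in> Bset (degree f)"
proof
  assume h: "r mod f = r"
  show "r \<in> Bset (degree f)"
  proof (cases "r = 0")
    case False
    then have "r mod f \<noteq> 0" using h by simp
    then have "degree (r mod f) < degree f" using degree_mod_less' assms by blast
    then show ?thesis using h by (simp add: Bset_def)
  qed (simp add: Bset_def)
next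
  assume "r \<in> Bset (degree f)"
  then show "r mod f = r" by (auto simp: Bset_def mod_poly_less)
qed

lemma quot_card_eq:
  fixes f :: "'a::{finite,field} poly"
  assumes "f \<noteq> 0"
  shows "quot_card f = card (UNIV :: 'a set) ^ degree f"
proof -
  have "{r :: 'a poly. r mod f = r} = Bset (degree f)" using mod_self_iff[OF assms] by auto
  then show ?thesis unfolding quot_card_def using card_Bset by metis
qed

lemma Bset_sub_closed:
  fixes a b :: "'a::ab_group_add poly"
  assumes a: "a \<in> Bset n" and b: "b \<in> Bset n"
  shows "a - b \<in> Bset n"
proof (cases "a - b = 0")
  case True then show ?thesis by (simp add: Bset_def)
next
  case False
  have "degree (a - b) \<le> max (degree a) (degree b)" by (rule degree_diff_le_max)
  moreover have "degree a < n \<or> a = 0" using a by (auto simp: Bset_def)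
  moreover have "degree b < n \<or> b = 0" using b by (auto simp: Bset_def)
  moreover have "n > 0" using calculation False by fastforce
  ultimately have "degree (a - b) < n" by auto
  then show ?thesis by (simp add: Bset_def)
qed

lemma prime_dvd_Bset:
  fixes f r :: "'a::field poly"
  assumes "f \<noteq> 0" "r \<in> Bset (degree f)" "f dvd r"
  shows "r = 0"
proof (rule ccontr)
  assume "r \<noteq> 0"
  then have "degree f \<le> degree r" using assms(3) dvd_imp_degree_le by blast
  moreover have "degree r < degree f" using assms(2) \<open>r \<noteq> 0\<close> by (simp add: Bset_def)
  ultimately show False by simp
qed

lemma irreducible_inverse:
  fixes f g :: "'a::{finite,field} poly"
  assumes irr: "irreducible f" and nd: "\<not> f dvd g"
  shows "\<exists>h. f dvd g * h - 1"
proof -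
  have f0: "f \<noteq> 0" using irr by auto
  have pr: "prime_elem f" using irr by (rule field_poly_irreducible_imp_prime)
  have nu: "\<not> is_unit f" using irr by (simp add: irreducible_def)
  have df: "degree f > 0" using nu is_unit_iff_degree[OF f0] by simp
  define S where "S = (Bset (degree f) :: 'a poly set)"
  define \<phi> where "\<phi> = (\<lambda>r. (g * r) mod f)"
  have fin: "finite S" unfolding S_def using card_Bset by blast
  have modB: "\<And>x. x mod f \<in> Bset (degree f)"
  proof -
    fix x :: "'a poly"
    have "(x mod f) mod f = x mod f" by simp
    then show "x mod f \<in> Bset (degree f)" using mod_self_iff[OF f0, of "x mod f"] by blast
  qed
  have sub: "\<phi> ` S \<subseteq> S" unfolding \<phi>_def S_def using modB by blast
  have inj: "inj_on \<phi> S"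
  proof (rule inj_onI)
    fix a b assume a: "a \<in> S" and b: "b \<in> S" and e: "\<phi> a = \<phi> b"
    then have "f dvd g * a - g * b" unfolding \<phi>_def using mod_eq_dvd_iff by blast
    then have "f dvd g * (a - b)" by (simp add: algebra_simps)
    then have "f dvd a - b" using pr nd prime_elem_dvd_mult_iff by blast
    moreover have "a - b \<in> Bset (degree f)" using a b Bset_sub_closed unfolding S_def by blast
    ultimately show "a = b" using prime_dvd_Bset[OF f0] by force
  qed
  have "card (\<phi> ` S) = card S" using card_image[OF inj] .
  then have "\<phi> ` S = S" using card_subset_eq[OF fin sub] by simp
  moreover have "1 \<in> S" unfolding S_def Bset_def using df by simp
  ultimately have "1 \<in> \<phi> ` S" by simp
  then obtain r where "1 = \<phi> r" by blast
  then have "(g * r) mod f = 1" unfolding \<phi>_def by simp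
  then have "(g * r) mod f = 1 mod f" using df by (simp add: mod_poly_less)
  then have "f dvd g * r - 1" using mod_eq_dvd_iff by blast
  then show ?thesis by blast
qed

lemma quot_is_field_iff:
  fixes f :: "'a::{finite,field} poly"
  assumes "degree f > 0"
  shows "quot_is_field f \<longleftrightarrow> irreducible f"
proof
  assume qf: "quot_is_field f"
  show "irreducible f"
  proof (rule ccontr)
    assume nirr: "\<not> irreducible f"
    have f0: "f \<noteq> 0" using assms by auto
    have nu: "\<not> is_unit f" using assms is_unit_iff_degree[OF f0] by simp 
    obtain a b where ab: "f = a * b" "\<not> is_unit a" "\<not> is_unit b"
      using nirr f0 nu unfolding irreducible_def by blast
    have a0: "a \<noteq> 0" "b \<noteq> 0" using ab f0 by auto
    have "degree b \<noteq> 0" using ab(3) a0 is_unit_iff_degree by blast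
    then have "degree a < degree f" using ab(1) a0 by (simp add: degree_mult_eq)
    then have "\<not> f dvd a" using a0 dvd_imp_degree_le leD by blast
    with qf obtain h where "f dvd a * h - 1" unfolding quot_is_field_def by blast
    then have "a dvd a * h - 1" using ab(1) dvd_mult_left by blast
    then have "a dvd a * h - (a * h - 1)" using dvd_diff dvd_triv_left by blast
    then have "a dvd 1" by simp
    with ab(2) show False by simp
  qed
next
  assume irr: "irreducible f"
  show "quot_is_field f"
    unfolding quot_is_field_def
  proof (intro conjI allI impI)
    show "\<not> f dvd 1" using irr by (simp add: irreducible_def)
    fix g assume "\<not> f dvd g"
    then show "\<exists>h. f dvd g * h - 1" using irreducible_inverse[OF irr] by blast
  qed
qed


definition addG :: "'a::field monoid" where
  "addG = \<lparr>carrier = UNIV, mult = (+), one = 0\<rparr>"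

lemma addG_group: "group (addG :: 'a::field monoid)"
  unfolding addG_def
  by (rule groupI) (auto simp: add.assoc intro: exI[of _ "- x" for x])

lemma addG_pow: "x [^]\<^bsub>(addG\<lparr>carrier := H\<rparr>)\<^esub> (n::nat) = of_nat n * (x :: 'a::field)"
  by (induct n) (simp_all add: nat_pow_def addG_def algebra_simps)

lemma CHAR_prime: "prime CHAR('a::{finite,field})"
proof -
  have "CHAR('a) > 0" by (rule finite_imp_CHAR_pos) simp
  then show ?thesis by (rule prime_CHAR_semidom)
qed

lemma card_prime_factor_is_CHAR:
  assumes "prime r" "r dvd card (UNIV :: 'a::{finite,field} set)"
  shows "r = CHAR('a)"
proof -
  let ?q = "card (UNIV :: 'a set)"
  have ord: "order (addG :: 'a monoid) = r ^ 1 * (?q div r)"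
    using assms by (simp add: order_def addG_def)
  have finG: "finite (carrier (addG :: 'a monoid))" by (simp add: addG_def)
  obtain H where H: "subgroup H (addG :: 'a monoid)" "card H = r ^ 1"
    using sylow_thm[OF assms(1) addG_group ord finG] by blast
  have cH: "card H = r" using H(2) by simp
  have "0 \<in> H" using subgroup.one_closed[OF H(1)] by (simp add: addG_def)
  moreover have "H \<noteq> {0}" using cH assms(1) by (auto simp: prime_nat_iff)
  ultimately obtain h where h: "h \<in> H" "h \<noteq> 0" by blast
  have gH: "group (addG\<lparr>carrier := H\<rparr>)" using subgroup.subgroup_is_group[OF H(1) addG_group] .
  have "h [^]\<^bsub>addG\<lparr>carrier := H\<rparr>\<^esub> order (addG\<lparr>carrier := H\<rparr>) = \<one>\<^bsub>addG\<lparr>carrier := H\<rparr>\<^esub>"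
    using group.pow_order_eq_1[OF gH] h(1) by simp
  moreover have "order (addG\<lparr>carrier := H\<rparr>) = r" using cH by (simp add: order_def)
  moreover have "\<one>\<^bsub>addG\<lparr>carrier := H\<rparr>\<^esub> = (0::'a)" by (simp add: addG_def)
  ultimately have "h [^]\<^bsub>addG\<lparr>carrier := H\<rparr>\<^esub> r = 0" by simp
  then have "of_nat r * h = 0" by (simp only: addG_pow)
  then have "of_nat r = (0::'a)" using h(2) by simp
  then have "CHAR('a) dvd r" using of_nat_eq_0_iff_char_dvd by blast
  then show ?thesis using primes_dvd_imp_eq[OF CHAR_prime[where 'a='a] assms(1)] by simp
qed

lemma card_is_CHAR_power:
  "\<exists>k. card (UNIV :: 'a::{finite,field} set) = CHAR('a) ^ k"
proof -
  let ?q = "card (UNIV :: 'a set)"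
  let ?p = "CHAR('a)"
  have q0: "?q > 0" using finite_UNIV_card_ge_0[where 'a='a] by simp
  have sub: "prime_factors ?q \<subseteq> {?p}"
    using card_prime_factor_is_CHAR by (auto simp: in_prime_factors_iff)
  have "?q = (\<Prod>r \<in> prime_factors ?q. r ^ multiplicity r ?q)"
    using prime_factorization_nat[OF q0] .
  also have "\<dots> = ?p ^ multiplicity ?p ?q"
  proof (cases "prime_factors ?q = {}")
    case True
    have "\<not> ?p dvd ?q"
    proof
      assume "?p dvd ?q"
      then have "?p \<in> prime_factors ?q" using CHAR_prime[where 'a='a] q0 in_prime_factors_iff by blast
      then show False using True by blast
    qed
    then have "multiplicity ?p ?q = 0" by (rule not_dvd_imp_multiplicity_0)
    then show ?thesis using True by simp
  next
    case False
    then have "prime_factors ?q = {?p}" using sub by blast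
    then show ?thesis by simp
  qed
  finally show ?thesis by blast
qed

lemma field_power_card:
  fixes x :: "'a::{finite,field}"
  shows "x ^ card (UNIV :: 'a set) = x"
proof (cases "x = 0")
  case False
  have "x * (\<Prod>y\<in>UNIV-{0}. x * y) = x * x ^ (card (UNIV :: 'a set) - 1) * \<Prod>(UNIV-{0})"
    by (simp add: prod.distrib mult_ac)
  also have "x * x ^ (card (UNIV :: 'a set) - 1) = x ^ Suc (card (UNIV :: 'a set) - 1)"
    by (subst power_Suc) auto
  also have "Suc (card (UNIV :: 'a set) - 1) = card (UNIV :: 'a set)"
    using finite_UNIV_card_ge_0[where ?'a = 'a] by simp
  also have "(\<Prod>y\<in>UNIV-{0}. x * y) = (\<Prod>y\<in>UNIV-{0}. y)"
    by (rule prod.reindex_bij_witness[of _ "\<lambda>y. y / x" "\<lambda>y. x * y"]) (use False in auto)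
  finally show ?thesis
    by simp
qed (use finite_UNIV_card_ge_0[where ?'a = 'a] in auto)

lemma field_power_card_pow:
  fixes x :: "'a::{finite,field}"
  shows "x ^ (card (UNIV :: 'a set) ^ c) = x"
  by (induction c) (simp_all add: field_power_card power_mult)

lemma frob_add:
  fixes x y :: "'a::{finite,field} poly"
  shows "(x + y) ^ (card (UNIV :: 'a set) ^ c) = x ^ (card (UNIV :: 'a set) ^ c) + y ^ (card (UNIV :: 'a set) ^ c)"
proof -
  obtain k where k: "card (UNIV :: 'a set) = CHAR('a) ^ k" using card_is_CHAR_power by blast
  have pr: "prime CHAR('a poly)" using CHAR_prime[where 'a='a] by simp
  have "card (UNIV :: 'a set) ^ c = CHAR('a poly) ^ (k * c)" by (simp add: k power_mult)
  from freshmans_dream'[OF pr this] show ?thesis .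
qed

lemma frob_const:
  fixes a :: "'a::{finite,field}"
  shows "[:a:] ^ (card (UNIV :: 'a::{finite,field} set) ^ c) = [:a:]"
  by (simp add: poly_const_pow field_power_card_pow)

lemma pCons_as: "pCons (a::'a::comm_semiring_1) h = [:a:] + [:0,1:] * h"
  by simp

lemma frob_pCons:
  fixes h :: "'a::{finite,field} poly"
  shows "(pCons a h) ^ (card (UNIV :: 'a set) ^ c) = [:a:] + [:0,1:] ^ (card (UNIV :: 'a set) ^ c) * h ^ (card (UNIV :: 'a set) ^ c)"
proof -
  have "(pCons a h) ^ (card (UNIV :: 'a set) ^ c) = ([:a:] + [:0,1:] * h) ^ (card (UNIV :: 'a set) ^ c)"
    by (simp only: pCons_as[of a h])
  also have "\<dots> = [:a:] ^ (card (UNIV :: 'a set) ^ c) + ([:0,1:] * h) ^ (card (UNIV :: 'a set) ^ c)"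
    by (rule frob_add)
  also have "\<dots> = [:a:] + [:0,1:] ^ (card (UNIV :: 'a set) ^ c) * h ^ (card (UNIV :: 'a set) ^ c)"
    by (simp only: frob_const power_mult_distrib)
  finally show ?thesis .
qed

lemma frob_dvd:
  fixes f g :: "'a::{finite,field} poly"
  assumes "f dvd [:0,1:] ^ (card (UNIV :: 'a set) ^ c) - [:0,1:]"
  shows "f dvd g ^ (card (UNIV :: 'a set) ^ c) - g"
proof (induction g rule: pCons_induct)
  case 0
  have "card (UNIV :: 'a set) ^ c > 0" using finite_UNIV_card_ge_0[where 'a='a] by simp
  then show ?case by (simp add: zero_power)
next
  case (pCons a h)
  let ?Q = "card (UNIV :: 'a set) ^ c"
  let ?X = "[:0,1:] :: 'a poly"
  have "(pCons a h) ^ ?Q - pCons a h = ?X ^ ?Q * (h ^ ?Q - h) + (?X ^ ?Q - ?X) * h"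
  proof -
    have e1: "(pCons a h) ^ ?Q = [:a:] + ?X ^ ?Q * h ^ ?Q" by (rule frob_pCons)
    have e2: "pCons a h = [:a:] + ?X * h" by (rule pCons_as)
    show ?thesis unfolding e1 by (subst e2) (simp add: algebra_simps)
  qed
  then show ?case using pCons.IH assms by (simp add: dvd_add dvd_mult)
qed


definition Kring :: "'a::field poly \<Rightarrow> 'a poly ring" where
  "Kring P = \<lparr>carrier = {x. degree x < degree P}, monoid.mult = (\<lambda>x y. (x * y) mod P),
     one = 1, zero = 0, add = (\<lambda>x y. (x + y) mod P)\<rparr>"

locale irrP =
  fixes P :: "'a::{finite,field} poly"
  assumes irr: "irreducible P"
begin

abbreviation "K \<equiv> Kring P"

lemma P0: "P \<noteq> 0" using irr by auto

lemma degP: "degree P > 0"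
proof -
  have "\<not> is_unit P" using irr by (simp add: irreducible_def)
  then show ?thesis using is_unit_iff_degree[OF P0] by simp
qed

lemma primeP: "prime_elem P" using irr by (rule field_poly_irreducible_imp_prime)

lemma P_dvd_ab: "a = 0 \<or> b = 0" if "P dvd a * b" "degree a < degree P" "degree b < degree P"
proof (rule ccontr)
  assume "\<not> (a = 0 \<or> b = 0)"
  then have "a \<noteq> 0" "b \<noteq> 0" by simp_all
  with that have "\<not> P dvd a" "\<not> P dvd b"
    by (auto simp add: mod_poly_less dvd_eq_mod_eq_0)
  moreover from \<open>P dvd a * b\<close> primeP have "P dvd a \<or> P dvd b"
    by (simp add: prime_elem_dvd_mult_iff)
  ultimately show False by simp
qed

lemma ab_mod_P0: "a = 0 \<or> b = 0" if "a * b mod P = 0" "degree a < degree P" "degree b < degree P"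
  using that P_dvd_ab by auto

lemma times_mod_P_1_imp_0:
  assumes x: "degree x < degree P"
    and x2: "\<forall>xa. x * xa mod P = 1 \<longrightarrow> \<not> degree xa < degree P"
  shows "x = 0"
proof (rule ccontr)
  assume x3: "x \<noteq> 0"
  have "\<not> P dvd x" using x x3 by (auto simp add: mod_poly_less dvd_eq_mod_eq_0)
  then obtain h where "P dvd x * h - 1" using irreducible_inverse[OF irr] by blast
  then have "(x * h) mod P = 1 mod P" using mod_eq_dvd_iff by blast
  then have "(x * h) mod P = 1" using degP by (simp add: mod_poly_less)
  then have "(x * (h mod P)) mod P = 1" by (simp add: mod_mult_right_eq)
  moreover have "degree (h mod P) < degree P"
    by (metis degree_0 degP degree_mod_less' P0)
  ultimately show False using x2 by auto
qed

lemma field_K: "field K"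
proof -
  have *: "\<exists>y. degree y < degree P \<and> P dvd x + y" if "degree x < degree P"
    for x :: "'a poly"
  proof -
    from that have "degree (- x) < degree P" by simp
    moreover have "P dvd (x + - x)" by simp
    ultimately show ?thesis by blast
  qed
  have **: "degree (x * y mod P) < degree P"
    if "degree x < degree P" and "degree y < degree P"
    for x y :: "'a poly"
    using that by (cases "x = 0 \<or> y = 0")
      (auto intro: degree_mod_less' dest: P_dvd_ab)
  show "field K"
    by standard (auto simp add: Kring_def Units_def algebra_simps degree_add_less mod_poly_less mod_add_eq mult_poly_add_left mod_mult_left_eq mod_mult_right_eq mod_eq_0_iff_dvd ab_mod_P0 * ** degP dest: times_mod_P_1_imp_0)
qed

lemma carrier_K: "carrier K = Bset (degree P)"
  using degP by (auto simp: Kring_def Bset_def)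

lemma finite_K: "finite (carrier K)" and card_K: "card (carrier K) = card (UNIV::'a set) ^ degree P"
  using card_Bset[of "degree P", where 'a='a] carrier_K by auto

lemma zero_K: "\<zero>\<^bsub>K\<^esub> = 0" and one_K: "\<one>\<^bsub>K\<^esub> = 1"
  by (simp_all add: Kring_def)

lemma pow_K: "x [^]\<^bsub>K\<^esub> (n::nat) = x ^ n mod P"
  by (induct n) (simp_all add: nat_pow_def Kring_def mod_poly_less degP mod_mult_left_eq mod_mult_right_eq ac_simps)

lemma pow_mult_of_K: "x [^]\<^bsub>mult_of K\<^esub> (n::nat) = x ^ n mod P"
  using pow_K by (simp add: nat_pow_mult_of)

lemma card_mult_of_K: "card (carrier (mult_of K)) = card (UNIV::'a set) ^ degree P - 1"
proof -
  have "0 \<in> carrier K" using degP by (simp add: Kring_def)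
  then show ?thesis using finite_K card_K by (simp add: zero_K card_Diff_singleton)
qed

lemma mod_in_K: "g mod P \<in> carrier K"
  using degP degree_mod_less'[OF P0] by (cases "g mod P = 0") (auto simp: Kring_def)

lemma fermat: "P dvd g ^ (card (UNIV::'a set) ^ degree P) - g"
proof -
  let ?N = "card (UNIV::'a set) ^ degree P"
  have N0: "?N > 0" using finite_UNIV_card_ge_0[where 'a='a] by simp
  let ?x = "g mod P"
  show ?thesis
  proof (cases "?x = 0")
    case True
    then have "P dvd g" by (simp add: dvd_eq_mod_eq_0)
    obtain M where M: "?N = Suc M" using N0 gr0_implies_Suc by blast
    have "g ^ ?N = g * g ^ (?N - 1)" unfolding M by simp
    then have "P dvd g ^ ?N" using \<open>P dvd g\<close> by (simp add: dvd_mult2)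
    then show ?thesis using \<open>P dvd g\<close> by (simp add: dvd_diff)
  next
    case False
    have xm: "?x \<in> carrier (mult_of K)" using mod_in_K False by (simp add: zero_K)
    have grp: "group (mult_of K)" using field.field_mult_group[OF field_K] .
    have "?x [^]\<^bsub>mult_of K\<^esub> order (mult_of K) = \<one>\<^bsub>mult_of K\<^esub>"
      using group.pow_order_eq_1[OF grp xm] .
    then have e: "?x ^ (?N - 1) mod P = 1"
      using card_mult_of_K by (simp add: order_def pow_mult_of_K one_K)
    have "g ^ ?N mod P = ?x ^ ?N mod P" by (simp add: power_mod)
    also have "?x ^ ?N = ?x * ?x ^ (?N - 1)"
    proof -
      obtain M where M: "?N = Suc M" using N0 gr0_implies_Suc by blast
      show ?thesis unfolding M by simp
    qed
    also have "(?x * ?x ^ (?N - 1)) mod P = (?x * (?x ^ (?N - 1) mod P)) mod P"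
      by (simp add: mod_mult_right_eq)
    also have "\<dots> = g mod P" using e by simp
    finally show ?thesis using mod_eq_dvd_iff by blast
  qed
qed

lemma card_ge2: "card (UNIV :: 'a set) \<ge> 2"
proof -
  have "card {0::'a, 1} = 2" by simp
  moreover have "card {0::'a, 1} \<le> card (UNIV :: 'a set)" by (rule card_mono) auto
  ultimately show ?thesis by simp
qed

lemma no_small:
  assumes c1: "1 \<le> c" and cd: "c < degree P"
  shows "\<not> (\<forall>g. P dvd g ^ (card (UNIV::'a set) ^ c) - g)"
proof
  assume all: "\<forall>g. P dvd g ^ (card (UNIV::'a set) ^ c) - g"
  let ?q = "card (UNIV::'a set)"
  let ?N = "?q ^ c - 1"
  have q2: "?q \<ge> 2" by (rule card_ge2)
  have "?q ^ c \<ge> ?q ^ 1" using q2 c1 by (intro power_increasing) auto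
  then have qc: "?q ^ c \<ge> 2" using q2 by simp
  have N1: "?N \<ge> 1" using qc by simp
  have qcd: "?q ^ c < ?q ^ degree P" using q2 cd by (simp add: power_strict_increasing)
  obtain a where a: "a \<in> carrier (mult_of K)"
    and gen: "carrier (mult_of K) = {a [^]\<^bsub>K\<^esub> i | i::nat. i \<in> UNIV}"
    using field.finite_field_mult_group_has_gen[OF field_K finite_K] by blast
  have a0: "a \<noteq> 0" and ad: "degree a < degree P" using a by (auto simp: Kring_def)
  have amod: "a mod P = a" using ad by (simp add: mod_poly_less)
  have "P dvd a ^ (?q ^ c) - a" using all by blast
  moreover have "a ^ (?q ^ c) = a * a ^ ?N"
  proof -
    obtain M where M: "?q ^ c = Suc M" using qc by (metis Suc_le_D numeral_2_eq_2)
    show ?thesis unfolding M by simp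
  qed
  ultimately have "P dvd a * (a ^ ?N - 1)" by (simp add: algebra_simps)
  moreover have "\<not> P dvd a" using a0 ad by (auto simp add: mod_poly_less dvd_eq_mod_eq_0)
  ultimately have "P dvd a ^ ?N - 1" using primeP prime_elem_dvd_mult_iff by blast
  then have aN: "a ^ ?N mod P = 1" using degP mod_eq_dvd_iff[of "a ^ ?N" P 1] by (simp add: mod_poly_less)
  have red: "a ^ i mod P = a ^ (i mod ?N) mod P" for i
  proof -
    have "a ^ i = a ^ (?N * (i div ?N) + i mod ?N)" by simp
    also have "\<dots> = (a ^ ?N) ^ (i div ?N) * a ^ (i mod ?N)" by (simp only: power_add power_mult)
    finally have "a ^ i = (a ^ ?N) ^ (i div ?N) * a ^ (i mod ?N)" .
    then have "a ^ i mod P = (((a ^ ?N) ^ (i div ?N)) mod P * a ^ (i mod ?N)) mod P"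
      by (simp add: mod_mult_left_eq)
    also have "((a ^ ?N) ^ (i div ?N)) mod P = ((a ^ ?N mod P) ^ (i div ?N)) mod P"
      by (simp add: power_mod)
    also have "\<dots> = 1" using aN degP by (simp add: mod_poly_less)
    finally show ?thesis by simp
  qed
  have "carrier (mult_of K) \<subseteq> (\<lambda>i. a ^ i mod P) ` {..<?N}"
  proof
    fix y assume "y \<in> carrier (mult_of K)"
    then obtain i :: nat where "y = a [^]\<^bsub>K\<^esub> i" using gen by blast
    then have "y = a ^ (i mod ?N) mod P" using red pow_K by simp
    moreover have "i mod ?N < ?N" using N1 by simp
    ultimately show "y \<in> (\<lambda>i. a ^ i mod P) ` {..<?N}" by blast
  qed
  then have "card (carrier (mult_of K)) \<le> card ((\<lambda>i. a ^ i mod P) ` {..<?N})"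
    by (rule card_mono[rotated]) simp
  also have "\<dots> \<le> ?N" using card_image_le[of "{..<?N}"] by simp
  finally have "?q ^ degree P - 1 \<le> ?q ^ c - 1" using card_mult_of_K by simp
  then show False using qcd qc by simp
qed

end

definition Aprop :: "'a::{finite,field} poly \<Rightarrow> nat \<Rightarrow> bool" where
  "Aprop f k \<longleftrightarrow> (\<forall>g. f dvd g ^ (card (UNIV::'a set) ^ k) - g)"

lemma Aprop_0: "Aprop f 0" by (simp add: Aprop_def)

lemma Aprop_add:
  assumes "Aprop f a" "Aprop f b"
  shows "Aprop f (a + b)"
  unfolding Aprop_def
proof
  fix g :: "'a poly"
  let ?q = "card (UNIV::'a set)"
  have "f dvd (g ^ (?q ^ a)) ^ (?q ^ b) - g ^ (?q ^ a)" using assms(2) by (simp add: Aprop_def)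
  moreover have "f dvd g ^ (?q ^ a) - g" using assms(1) by (simp add: Aprop_def)
  ultimately have "f dvd ((g ^ (?q ^ a)) ^ (?q ^ b) - g ^ (?q ^ a)) + (g ^ (?q ^ a) - g)" by (rule dvd_add)
  then show "f dvd g ^ (?q ^ (a + b)) - g" by (simp add: power_add power_mult)
qed

lemma Aprop_sub:
  assumes "Aprop f a" "Aprop f (a + b)"
  shows "Aprop f b"
  unfolding Aprop_def
proof
  fix g :: "'a poly"
  let ?q = "card (UNIV::'a set)"
  have "f dvd (g ^ (?q ^ b)) ^ (?q ^ a) - g ^ (?q ^ b)" using assms(1) by (simp add: Aprop_def)
  moreover have "f dvd g ^ (?q ^ (a + b)) - g" using assms(2) by (simp add: Aprop_def)
  moreover have eq: "(g ^ (?q ^ b)) ^ (?q ^ a) = g ^ (?q ^ (a + b))"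
    by (simp add: power_add flip: power_mult) (simp add: mult.commute)
  ultimately have "f dvd (g ^ (?q ^ (a + b)) - g) - (g ^ (?q ^ (a + b)) - g ^ (?q ^ b))"
    by (metis dvd_diff)
  then show "f dvd g ^ (?q ^ b) - g" by simp
qed

lemma Aprop_mult:
  assumes "Aprop f a"
  shows "Aprop f (a * k)"
  by (induct k) (simp_all add: Aprop_0 Aprop_add assms add.commute)

lemma Aprop_gcd:
  assumes "Aprop f m" "Aprop f n"
  shows "Aprop f (gcd m n)"
  using assms
proof (induction m n rule: gcd_nat_induct)
  case (step m n)
  have "Aprop f (n * (m div n))" using step.prems(2) by (rule Aprop_mult)
  moreover have "Aprop f (n * (m div n) + m mod n)" using step.prems(1) by simp
  ultimately have "Aprop f (m mod n)" by (rule Aprop_sub)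
  then have "Aprop f (gcd n (m mod n))" using step.IH step.prems(2) by blast
  then show ?case by (simp add: gcd_non_0_nat[OF step.hyps[THEN less_imp_neq, symmetric]] )
qed simp

lemma irr_Aprop_iff:
  fixes P :: "'a::{finite,field} poly"
  assumes irr: "irreducible P" and m: "m \<ge> 1"
  shows "Aprop P m \<longleftrightarrow> degree P dvd m"
proof -
  interpret irrP P by unfold_locales (rule irr)
  have Ad: "Aprop P (degree P)" unfolding Aprop_def using fermat by blast
  show ?thesis
  proof
    assume Am: "Aprop P m"
    let ?g = "gcd (degree P) m"
    have Ag: "Aprop P ?g" using Aprop_gcd[OF Ad Am] .
    have g1: "?g \<ge> 1" using m by (simp add: Suc_le_eq)
    have gd: "?g \<le> degree P" using degP by (simp add: gcd_le1_nat)
    have "\<not> ?g < degree P" using no_small[OF g1] Ag unfolding Aprop_def by blast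
    then have "?g = degree P" using gd by simp
    then show "degree P dvd m" by (metis gcd_dvd2)
  next
    assume "degree P dvd m"
    then obtain k where "m = degree P * k" by blast
    then show "Aprop P m" using Aprop_mult[OF Ad] by simp
  qed
qed


abbreviation (input) monicp :: "'a::field poly \<Rightarrow> bool" where
  "monicp P \<equiv> lead_coeff P = 1"

lemma exists_irr_factor:
  fixes f :: "'a::field poly"
  assumes "degree f > 0"
  shows "\<exists>P. monicp P \<and> irreducible P \<and> P dvd f"
  using assms
proof (induction "degree f" arbitrary: f rule: less_induct)
  case less
  have f0: "f \<noteq> 0" using less.prems by auto
  have nu: "\<not> is_unit f" using less.prems is_unit_iff_degree[OF f0] by simp
  show ?case
  proof (cases "irreducible f")
    case True
    let ?c = "inverse (lead_coeff f)"
    define P where "P = [:?c:] * f"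
    have c0: "?c \<noteq> 0" using f0 by simp
    have u: "is_unit [:?c:]" using c0 by (simp add: is_unit_pCons_iff)
    have "irreducible P" unfolding P_def using True irreducible_mult_unit_left[OF u] by simp
    moreover have "lead_coeff P = 1" unfolding P_def using f0 by (simp add: lead_coeff_mult)
    moreover have "P dvd f"
    proof
      show "f = P * [:lead_coeff f:]" unfolding P_def using f0 by simp
    qed
    ultimately show ?thesis by blast
  next
    case False
    obtain a b where ab: "f = a * b" "\<not> is_unit a" "\<not> is_unit b"
      using False f0 nu unfolding irreducible_def by blast
    have a0: "a \<noteq> 0" "b \<noteq> 0" using ab f0 by auto
    have "degree b \<noteq> 0" using ab(3) a0 is_unit_iff_degree by blast
    then have lt: "degree a < degree f" using ab(1) a0 by (simp add: degree_mult_eq)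
    have "degree a \<noteq> 0" using ab(2) a0 is_unit_iff_degree by blast
    then obtain P where "monicp P" "irreducible P" "P dvd a" using less.hyps[OF lt] by auto
    then show ?thesis using ab(1) by auto
  qed
qed

lemma monic_irr_dvd_eq:
  fixes P Q :: "'a::field poly"
  assumes "monicp P" "monicp Q" "irreducible P" "irreducible Q" "P dvd Q"
  shows "P = Q"
proof -
  obtain r where r: "Q = P * r" using assms(5) by blast
  have "\<not> is_unit P" using assms(3) by (simp add: irreducible_def)
  then have "is_unit r" using assms(4) r unfolding irreducible_def by blast
  then have "\<exists>c. r = [:c:] \<and> c \<noteq> 0" by (elim is_unit_polyE) auto
  then obtain c where c: "r = [:c:]" "c \<noteq> 0" by blast
  have "lead_coeff Q = lead_coeff P * c" using r c by (simp add: lead_coeff_mult)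
  then have "c = 1" using assms(1,2) by simp
  then show ?thesis using r c by simp
qed

lemma prime_dvd_prod_ex:
  fixes P :: "'a::field poly"
  assumes "prime_elem P" "finite T" "P dvd (\<Prod>Q\<in>T. Q)"
  shows "\<exists>Q\<in>T. P dvd Q"
  using assms(2,3)
proof (induction T rule: finite_induct)
  case empty
  then show ?case using assms(1) by (simp add: prime_elem_def)
next
  case (insert x F)
  then have "P dvd x * (\<Prod>Q\<in>F. Q)" by simp
  then have "P dvd x \<or> P dvd (\<Prod>Q\<in>F. Q)" using assms(1) prime_elem_dvd_mult_iff by blast
  then show ?case using insert.IH by blast
qed

definition MI :: "'a::field poly set" where
  "MI = {P. monicp P \<and> irreducible P}"

lemma in_prod_MI:
  fixes P :: "'a::field poly"
  assumes "P \<in> MI" "T \<subseteq> MI" "finite T" "P dvd (\<Prod>Q\<in>T. Q)"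
  shows "P \<in> T"
proof -
  have "prime_elem P" using assms(1) by (simp add: MI_def field_poly_irreducible_imp_prime)
  then obtain Q where "Q \<in> T" "P dvd Q" using prime_dvd_prod_ex assms(3,4) by blast
  then have "P = Q" using monic_irr_dvd_eq assms(1,2) unfolding MI_def by blast
  then show ?thesis using \<open>Q \<in> T\<close> by simp
qed

lemma prod_MI_inj:
  fixes T T' :: "'a::field poly set"
  assumes "T \<subseteq> MI" "T' \<subseteq> MI" "finite T" "finite T'" "(\<Prod>Q\<in>T. Q) = (\<Prod>Q\<in>T'. Q)"
  shows "T = T'"
proof -
  have "P \<in> T'" if "P \<in> T" for P
  proof -
    have "P dvd (\<Prod>Q\<in>T. Q)" using dvd_prodI[OF assms(3) that, of "\<lambda>Q. Q"] by simp
    then show ?thesis using in_prod_MI[of P T'] assms that by auto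
  qed
  moreover have "P \<in> T" if "P \<in> T'" for P
  proof -
    have "P dvd (\<Prod>Q\<in>T'. Q)" using dvd_prodI[OF assms(4) that, of "\<lambda>Q. Q"] by simp
    then show ?thesis using in_prod_MI[of P T] assms that by auto
  qed
  ultimately show ?thesis by blast
qed

lemma prod_MI_nz: "T \<subseteq> MI \<Longrightarrow> (\<Prod>Q\<in>T. Q) \<noteq> (0::'a::field poly)"
  by (cases "finite T") (auto simp: MI_def prod_zero_iff)

lemma prod_MI_monic: "T \<subseteq> MI \<Longrightarrow> lead_coeff (\<Prod>Q\<in>T. Q) = (1::'a::field)"
  by (auto simp: MI_def lead_coeff_prod intro!: prod.neutral)

lemma prod_MI_degree: "T \<subseteq> MI \<Longrightarrow> degree (\<Prod>Q\<in>T. Q) = (\<Sum>Q\<in>T. degree (Q::'a::field poly))"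
  by (rule degree_prod_eq_sum_degree) (auto simp: MI_def)

lemma Aprop_dvd: "Aprop f n \<Longrightarrow> g dvd f \<Longrightarrow> Aprop g n"
  unfolding Aprop_def using dvd_trans by blast

lemma Aprop_prod:
  fixes T :: "'a::{finite,field} poly set"
  assumes "finite T" "T \<subseteq> MI" "\<forall>P\<in>T. Aprop P n"
  shows "Aprop (\<Prod>Q\<in>T. Q) n"
  using assms
proof (induction T rule: finite_induct)
  case empty then show ?case by (simp add: Aprop_def)
next
  case (insert P F)
  have AF: "Aprop (\<Prod>Q\<in>F. Q) n" using insert by auto
  have AP: "Aprop P n" using insert by auto
  have PMI: "P \<in> MI" using insert by auto
  have nd: "\<not> P dvd (\<Prod>Q\<in>F. Q)" using in_prod_MI[OF PMI _ insert(1)] insert by auto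
  have pr: "prime_elem P" using PMI by (simp add: MI_def field_poly_irreducible_imp_prime)
  show ?case unfolding Aprop_def
  proof
    fix g :: "'a poly"
    let ?x = "g ^ (card (UNIV::'a set) ^ n) - g"
    obtain y where y: "?x = (\<Prod>Q\<in>F. Q) * y" using AF unfolding Aprop_def by blast
    have "P dvd ?x" using AP unfolding Aprop_def by blast
    then have "P dvd (\<Prod>Q\<in>F. Q) * y" using y by simp
    then have "P dvd y" using nd pr prime_elem_dvd_mult_iff by blast
    then have "P * (\<Prod>Q\<in>F. Q) dvd ?x" using y by (simp add: mult.commute mult_dvd_mono)
    then show "(\<Prod>Q\<in>insert P F. Q) dvd ?x" using insert(1,2) by simp
  qed
qed


definition Zp :: "nat \<Rightarrow> 'a::{finite,field} poly" where
  "Zp k = [:0,1:] ^ (card (UNIV::'a set) ^ k) - [:0,1:]"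

lemma card_ge2': "card (UNIV :: 'a::field set) \<ge> 2 \<or> infinite (UNIV :: 'a set)"
proof (cases "finite (UNIV :: 'a set)")
  case True
  have "card {0::'a, 1} = 2" by simp
  moreover have "card {0::'a, 1} \<le> card (UNIV :: 'a set)" using True by (intro card_mono) auto
  ultimately show ?thesis by simp
qed simp

lemma q_ge2: "card (UNIV :: 'a::{finite,field} set) \<ge> 2"
  using card_ge2'[where 'a='a] by simp

lemma qpow_ge2: "k \<ge> 1 \<Longrightarrow> card (UNIV :: 'a::{finite,field} set) ^ k \<ge> 2"
proof -
  assume k: "k \<ge> 1"
  have "card (UNIV :: 'a set) ^ k \<ge> card (UNIV :: 'a set) ^ 1"
    using q_ge2[where 'a='a] k by (intro power_increasing) auto
  then show ?thesis using q_ge2[where 'a='a] by simp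
qed

lemma of_nat_card: "of_nat (card (UNIV :: 'a::{finite,field} set)) = (0::'a)"
proof -
  obtain k where k: "card (UNIV :: 'a set) = CHAR('a) ^ k" using card_is_CHAR_power by blast
  have "k \<noteq> 0" using k q_ge2[where 'a='a] by (cases k) auto
  then have "CHAR('a) dvd card (UNIV :: 'a set)" using k by simp
  then show ?thesis using of_nat_eq_0_iff_char_dvd by blast
qed

lemma degree_Zp: "k \<ge> 1 \<Longrightarrow> degree (Zp k :: 'a::{finite,field} poly) = card (UNIV :: 'a set) ^ k"
  and lead_Zp: "k \<ge> 1 \<Longrightarrow> lead_coeff (Zp k :: 'a::{finite,field} poly) = 1"
proof -
  assume k: "k \<ge> 1"
  let ?Q = "card (UNIV :: 'a set) ^ k"
  have Q2: "?Q \<ge> 2" using qpow_ge2[OF k, where 'a='a] .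
  have dX: "degree ([:0,1:] ^ ?Q :: 'a poly) = ?Q" using degree_linear_power[of "0::'a" ?Q] by simp
  have lX: "lead_coeff ([:0,1:] ^ ?Q :: 'a poly) = 1" by (simp add: lead_coeff_power)
  have d1: "degree (- [:0,1:] :: 'a poly) < degree ([:0,1:] ^ ?Q :: 'a poly)" using dX Q2 by simp
  have e: "(Zp k :: 'a poly) = - [:0,1:] + [:0,1:] ^ ?Q" by (simp add: Zp_def)
  show "degree (Zp k :: 'a poly) = ?Q" unfolding e using degree_add_eq_right[OF d1] dX by simp
  show "lead_coeff (Zp k :: 'a poly) = 1" unfolding e using lead_coeff_add_le[OF d1] lX by simp
qed

lemma Zp_nz:
  assumes "k \<ge> 1" shows "(Zp k :: 'a::{finite,field} poly) \<noteq> 0"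
proof
  assume "(Zp k :: 'a poly) = 0"
  with lead_Zp[OF assms, where 'a='a] show False by simp
qed

lemma Aprop_iff_dvd_Zp: "Aprop f k \<longleftrightarrow> f dvd Zp k"
  unfolding Aprop_def Zp_def using frob_dvd by blast

lemma pderiv_Zp: "k \<ge> 1 \<Longrightarrow> pderiv (Zp k :: 'a::{finite,field} poly) = -1"
proof -
  assume k: "k \<ge> 1"
  let ?Q = "card (UNIV :: 'a set) ^ k"
  have "of_nat ?Q = (0::'a)" using of_nat_card[where 'a='a] k by (simp add: of_nat_power power_0_left)
  then show ?thesis using k by (simp add: Zp_def pderiv_diff pderiv_power pderiv_pCons zero_power one_pCons)
qed

lemma sqfree:
  fixes f P :: "'a::{finite,field} poly"
  assumes "Aprop f n" "n \<ge> 1" "P * P dvd f"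
  shows "is_unit P"
proof -
  have "P * P dvd Zp n" using assms(1,3) Aprop_iff_dvd_Zp dvd_trans by blast
  then obtain r where "Zp n = P * P * r" by (elim dvdE)
  then have r: "Zp n = P * (P * r)" by (simp add: mult.assoc)
  have "pderiv (Zp n :: 'a poly) = P * pderiv (P * r) + (P * r) * pderiv P"
    unfolding r by (rule pderiv_mult)
  then have "P dvd pderiv (Zp n :: 'a poly)" by (simp add: dvd_add mult.assoc)
  then have "P dvd -1" using pderiv_Zp[OF assms(2), where 'a='a] by simp
  then have "P dvd 1" by (simp only: dvd_minus_iff)
  then show ?thesis by simp
qed

lemma decomp:
  fixes f :: "'a::{finite,field} poly"
  assumes "lead_coeff f = 1" "Aprop f n" "n \<ge> 1"
  shows "\<exists>T. finite T \<and> T \<subseteq> MI \<and> (\<forall>P\<in>T. degree P dvd n) \<and> f = (\<Prod>Q\<in>T. Q)"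
  using assms(1,2)
proof (induction "degree f" arbitrary: f rule: less_induct)
  case less
  show ?case
  proof (cases "degree f = 0")
    case True
    then have "f = [:lead_coeff f:]" by (metis degree_0_id)
    then have "f = 1" using less.prems(1) by (simp add: one_pCons)
    then show ?thesis by (intro exI[of _ "{}"]) simp
  next
    case False
    then obtain P where P: "lead_coeff P = 1" "irreducible P" "P dvd f"
      using exists_irr_factor[of f] by auto
    then obtain g where g: "f = P * g" by blast
    have f0: "f \<noteq> 0" using less.prems(1) by auto
    have g0: "g \<noteq> 0" "P \<noteq> 0" using g f0 by auto
    have lg: "lead_coeff g = 1" using less.prems(1) g P(1) by (simp add: lead_coeff_mult)
    have dP: "degree P > 0"
    proof -
      have "\<not> is_unit P" using P(2) by (simp add: irreducible_def)
      then show ?thesis using is_unit_iff_degree[OF g0(2)] by simp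
    qed
    have dg: "degree g < degree f" using g g0 dP by (simp add: degree_mult_eq)
    have Ag: "Aprop g n" using Aprop_dvd[OF less.prems(2)] g by simp
    obtain T where T: "finite T" "T \<subseteq> MI" "\<forall>P\<in>T. degree P dvd n" "g = (\<Prod>Q\<in>T. Q)"
      using less.hyps[OF dg lg Ag] by blast
    have "P \<notin> T"
    proof
      assume "P \<in> T"
      then have "P dvd g" using dvd_prodI[OF T(1), of P "\<lambda>Q. Q"] T(4) by simp
      then have "P * P dvd f" using g by simp
      then have "is_unit P" using sqfree[OF less.prems(2) assms(3)] by blast
      then show False using P(2) by (simp add: irreducible_def)
    qed
    have AP: "Aprop P n" using Aprop_dvd[OF less.prems(2) P(3)] .
    have "degree P dvd n" using irr_Aprop_iff[OF P(2) assms(3)] AP by blast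
    moreover have "P \<in> MI" using P by (simp add: MI_def)
    ultimately show ?thesis using T \<open>P \<notin> T\<close> g
      by (intro exI[of _ "insert P T"]) auto
  qed
qed

definition Irr :: "nat \<Rightarrow> 'a::field poly set" where
  "Irr d = {P \<in> MI. degree P = d}"

definition IrrD :: "nat \<Rightarrow> 'a::field poly set" where
  "IrrD m = {P \<in> MI. degree P dvd m}"

lemma finite_deg_le: "finite {P :: 'a::{finite,field} poly. degree P \<le> m}"
proof -
  have "{P :: 'a poly. degree P \<le> m} \<subseteq> Bset (Suc m)" by (auto simp: Bset_def)
  then show ?thesis using card_Bset[of "Suc m", where 'a='a] finite_subset by blast
qed

lemma finite_IrrD: "m \<ge> 1 \<Longrightarrow> finite (IrrD m :: 'a::{finite,field} poly set)"
proof -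
  assume m: "m \<ge> 1"
  have "IrrD m \<subseteq> {P :: 'a poly. degree P \<le> m}"
    using m by (auto simp: IrrD_def dest: dvd_imp_le)
  then show ?thesis using finite_deg_le finite_subset by blast
qed

lemma finite_Irr: "finite (Irr d :: 'a::{finite,field} poly set)"
proof -
  have "Irr d \<subseteq> {P :: 'a poly. degree P \<le> d}" by (auto simp: Irr_def)
  then show ?thesis using finite_deg_le finite_subset by blast
qed

lemma IrrD_Aprop: "m \<ge> 1 \<Longrightarrow> P \<in> IrrD m \<Longrightarrow> Aprop (P :: 'a::{finite,field} poly) m"
  using irr_Aprop_iff by (auto simp: IrrD_def MI_def)

lemma sumdeg_eq:
  assumes m: "m \<ge> 1"
  shows "(\<Sum>P\<in>(IrrD m :: 'a::{finite,field} poly set). degree P) = card (UNIV :: 'a set) ^ m"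
proof (rule antisym)
  have fin: "finite (IrrD m :: 'a poly set)" using finite_IrrD[OF m] .
  have sub: "(IrrD m :: 'a poly set) \<subseteq> MI" by (auto simp: IrrD_def)
  have "Aprop (\<Prod>Q\<in>(IrrD m :: 'a poly set). Q) m"
    using Aprop_prod[OF fin sub] IrrD_Aprop[OF m] by blast
  then have "(\<Prod>Q\<in>(IrrD m :: 'a poly set). Q) dvd Zp m" using Aprop_iff_dvd_Zp by blast
  then have "degree (\<Prod>Q\<in>(IrrD m :: 'a poly set). Q) \<le> degree (Zp m :: 'a poly)"
    using Zp_nz[OF m] dvd_imp_degree_le by blast
  then show "(\<Sum>P\<in>(IrrD m :: 'a poly set). degree P) \<le> card (UNIV :: 'a set) ^ m"
    using prod_MI_degree[OF sub] degree_Zp[OF m, where 'a='a] by simp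
next
  have AZ: "Aprop (Zp m :: 'a poly) m" unfolding Aprop_iff_dvd_Zp by simp
  obtain T where T: "finite T" "T \<subseteq> MI" "\<forall>P\<in>T. degree P dvd m" "(Zp m :: 'a poly) = (\<Prod>Q\<in>T. Q)"
    using decomp[OF lead_Zp[OF m, where 'a='a] AZ m] by blast
  have TI: "T \<subseteq> IrrD m" using T(2,3) by (auto simp: IrrD_def)
  have "card (UNIV :: 'a set) ^ m = (\<Sum>P\<in>T. degree P)"
    using degree_Zp[OF m, where 'a='a] T(4) prod_MI_degree[OF T(2)] by simp
  also have "\<dots> \<le> (\<Sum>P\<in>(IrrD m :: 'a poly set). degree P)"
    using TI finite_IrrD[OF m] by (intro sum_mono2) auto
  finally show "card (UNIV :: 'a set) ^ m \<le> (\<Sum>P\<in>(IrrD m :: 'a poly set). degree P)" .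
qed

lemma IrrD_Union: "m \<ge> 1 \<Longrightarrow> IrrD m = (\<Union>d\<in>{d. d dvd m}. Irr d)"
  by (auto simp: IrrD_def Irr_def)

lemma sumdeg_split:
  assumes m: "m \<ge> 1"
  shows "(\<Sum>P\<in>(IrrD m :: 'a::{finite,field} poly set). degree P) = (\<Sum>d\<in>{d. d dvd m}. d * card (Irr d :: 'a poly set))"
proof -
  have finD: "finite {d. d dvd m}" using m by simp
  have "(\<Sum>P\<in>(IrrD m :: 'a poly set). degree P) = (\<Sum>d\<in>{d. d dvd m}. \<Sum>P\<in>(Irr d :: 'a poly set). degree P)"
  proof -
    have fin: "\<forall>d\<in>{d. d dvd m}. finite (Irr d :: 'a poly set)" using finite_Irr by blast
    have disj: "\<forall>i\<in>{d. d dvd m}. \<forall>j\<in>{d. d dvd m}. i \<noteq> j \<longrightarrow> (Irr i :: 'a poly set) \<inter> Irr j = {}"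
      by (auto simp: Irr_def)
    show ?thesis unfolding IrrD_Union[OF m] by (rule sum.UNION_disjoint[OF finD fin disj])
  qed
  also have "\<dots> = (\<Sum>d\<in>{d. d dvd m}. d * card (Irr d :: 'a poly set))"
    by (intro sum.cong refl) (simp add: Irr_def)
  finally show ?thesis .
qed

lemma gauss:
  assumes m: "m \<ge> 1"
  shows "(\<Sum>d\<in>{d. d dvd m}. d * card (Irr d :: 'a::{finite,field} poly set)) = card (UNIV :: 'a set) ^ m"
  using sumdeg_eq[OF m, where 'a='a] sumdeg_split[OF m, where 'a='a] by simp


lemma carm_iff:
  fixes f :: "'a::{finite,field} poly"
  assumes "lead_coeff f = 1" "degree f = n" "n \<ge> 1"
  shows "carmichael_poly f \<longleftrightarrow> \<not> irreducible f \<and> Aprop f n"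
proof -
  have f0: "f \<noteq> 0" using assms(1) by auto
  have "quot_card f = card (UNIV :: 'a set) ^ n" using quot_card_eq[OF f0] assms(2) by simp
  moreover have "quot_is_field f \<longleftrightarrow> irreducible f" using quot_is_field_iff[of f] assms(2,3) by simp
  ultimately show ?thesis unfolding carmichael_poly_def Aprop_def by simp
qed

lemma MI_deg_pos: "P \<in> MI \<Longrightarrow> degree (P::'a::field poly) > 0"
proof -
  assume "P \<in> MI"
  then have P: "irreducible P" "P \<noteq> 0" by (auto simp: MI_def)
  then have "\<not> is_unit P" by (simp add: irreducible_def)
  then show ?thesis using is_unit_iff_degree[OF P(2)] by simp
qed

definition IrrP :: "nat \<Rightarrow> 'a::field poly set" where
  "IrrP n = {P \<in> MI. degree P dvd n \<and> degree P < n}"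

definition TT :: "nat \<Rightarrow> 'a::field poly set set" where
  "TT n = {T. T \<subseteq> IrrP n \<and> (\<Sum>P\<in>T. degree P) = n}"

definition CarmSet :: "nat \<Rightarrow> 'a::{finite,field} poly set" where
  "CarmSet n = {f. lead_coeff f = 1 \<and> degree f = n \<and> carmichael_poly f}"

lemma count_CarmSet: "carmichael_count TYPE('a::{finite,field}) n = card (CarmSet n :: 'a poly set)"
  by (simp add: carmichael_count_def CarmSet_def)

lemma finite_IrrP: "n \<ge> 1 \<Longrightarrow> finite (IrrP n :: 'a::{finite,field} poly set)"
proof -
  assume n: "n \<ge> 1"
  have "IrrP n \<subseteq> (IrrD n :: 'a poly set)" by (auto simp: IrrP_def IrrD_def)
  then show ?thesis using finite_IrrD[OF n] finite_subset by blast
qed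

lemma TT_finite: "n \<ge> 1 \<Longrightarrow> finite (TT n :: 'a::{finite,field} poly set set)"
proof -
  assume n: "n \<ge> 1"
  have "TT n \<subseteq> Pow (IrrP n :: 'a poly set)" by (auto simp: TT_def)
  moreover have "finite (Pow (IrrP n :: 'a poly set))" using finite_IrrP[OF n] by simp
  ultimately show ?thesis by (rule finite_subset)
qed

lemma not_irr_prod:
  fixes T :: "'a::field poly set"
  assumes "finite T" "T \<subseteq> MI" "P \<in> T" "Q \<in> T" "P \<noteq> Q"
  shows "\<not> irreducible (\<Prod>R\<in>T. R)"
proof
  assume irr: "irreducible (\<Prod>R\<in>T. R)"
  have e: "(\<Prod>R\<in>T. R) = P * (\<Prod>R\<in>T - {P}. R)"
    using assms(1,3) by (simp add: prod.remove)
  have sub: "T - {P} \<subseteq> MI" using assms(2) by auto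
  have "irreducible P" using assms(2,3) by (auto simp: MI_def)
  then have "\<not> is_unit P" by (simp add: irreducible_def)
  moreover have "\<not> is_unit (\<Prod>R\<in>T - {P}. R)"
  proof -
    have "degree (\<Prod>R\<in>T - {P}. R) = (\<Sum>R\<in>T - {P}. degree R)" by (rule prod_MI_degree[OF sub])
    also have "\<dots> \<ge> degree Q" using assms by (intro member_le_sum) auto
    finally have "degree (\<Prod>R\<in>T - {P}. R) > 0" using MI_deg_pos[of Q] assms(2,4) by auto
    then show ?thesis using is_unit_iff_degree[OF prod_MI_nz[OF sub]] by simp
  qed
  ultimately show False using irr e unfolding irreducible_def by blast
qed

lemma CarmSet_eq:
  assumes n: "n \<ge> 1"
  shows "(CarmSet n :: 'a::{finite,field} poly set) = (\<lambda>T. \<Prod>P\<in>T. P) ` TT n"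
proof (intro equalityI subsetI)
  fix f :: "'a poly" assume "f \<in> CarmSet n"
  then have f: "lead_coeff f = 1" "degree f = n" "carmichael_poly f" by (auto simp: CarmSet_def)
  then have nirr: "\<not> irreducible f" and Af: "Aprop f n" using carm_iff[OF f(1,2) n] by auto
  obtain T where T: "finite T" "T \<subseteq> MI" "\<forall>P\<in>T. degree P dvd n" "f = (\<Prod>Q\<in>T. Q)"
    using decomp[OF f(1) Af n] by blast
  have sumT: "(\<Sum>P\<in>T. degree P) = n" using prod_MI_degree[OF T(2)] T(4) f(2) by simp
  have "\<forall>P\<in>T. degree P < n"
  proof (rule ccontr)
    assume "\<not> (\<forall>P\<in>T. degree P < n)"
    then obtain P where P: "P \<in> T" "degree P \<ge> n" by auto
    have "degree P \<le> n" using member_le_sum[OF P(1) _ T(1), of degree] sumT by simp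
    then have dP: "degree P = n" using P(2) by simp
    have "T = {P}"
    proof (rule ccontr)
      assume "T \<noteq> {P}"
      then obtain Q where Q: "Q \<in> T" "Q \<noteq> P" using P(1) by blast
      have "(\<Sum>R\<in>T. degree R) = degree P + (\<Sum>R\<in>T - {P}. degree R)"
        using T(1) P(1) by (simp add: sum.remove)
      moreover have "(\<Sum>R\<in>T - {P}. degree R) \<ge> degree Q" using Q T(1) by (intro member_le_sum) auto
      moreover have "degree Q > 0" using MI_deg_pos[of Q] Q T(2) by auto
      ultimately show False using sumT dP by simp
    qed
    then have "f = P" using T(4) by simp
    moreover have "irreducible P" using P(1) T(2) by (auto simp: MI_def)
    ultimately show False using nirr by simp
  qed
  then have "T \<in> TT n" using T(2,3) sumT by (auto simp: TT_def IrrP_def)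
  then show "f \<in> (\<lambda>T. \<Prod>P\<in>T. P) ` TT n" using T(4) by blast
next
  fix f :: "'a poly" assume "f \<in> (\<lambda>T. \<Prod>P\<in>T. P) ` TT n"
  then obtain T where T: "T \<in> TT n" "f = (\<Prod>P\<in>T. P)" by blast
  have sub: "T \<subseteq> MI" and sumT: "(\<Sum>P\<in>T. degree P) = n" and lt: "\<forall>P\<in>T. degree P dvd n \<and> degree P < n"
    using T(1) by (auto simp: TT_def IrrP_def)
  have finT: "finite T" using T(1) finite_IrrP[OF n] finite_subset by (auto simp: TT_def)
  have lf: "lead_coeff f = 1" using prod_MI_monic[OF sub] T(2) by simp
  have df: "degree f = n" using prod_MI_degree[OF sub] T(2) sumT by simp
  have Af: "Aprop f n" unfolding T(2)
  proof (rule Aprop_prod[OF finT sub])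
    show "\<forall>P\<in>T. Aprop P n" using lt sub irr_Aprop_iff[OF _ n] by (auto simp: MI_def)
  qed
  have "T \<noteq> {}" using sumT n by auto
  then obtain P where P: "P \<in> T" by blast
  have "T \<noteq> {P}" using sumT lt P by auto
  then obtain Q where Q: "Q \<in> T" "Q \<noteq> P" using P by blast
  have "\<not> irreducible f" unfolding T(2) using not_irr_prod[OF finT sub P Q(1) Q(2)[symmetric]] .
  then have "carmichael_poly f" using carm_iff[OF lf df n] Af by simp
  then show "f \<in> CarmSet n" using lf df by (simp add: CarmSet_def)
qed

lemma count_TT:
  assumes n: "n \<ge> 1"
  shows "carmichael_count TYPE('a::{finite,field}) n = card (TT n :: 'a poly set set)"
proof -
  have inj: "inj_on (\<lambda>T. \<Prod>P\<in>T. P) (TT n :: 'a poly set set)"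
  proof (rule inj_onI)
    fix T T' :: "'a poly set" assume TT: "T \<in> TT n" "T' \<in> TT n" and eq: "(\<Prod>P\<in>T. P) = (\<Prod>P\<in>T'. P)"
    have s: "T \<subseteq> IrrP n" "T' \<subseteq> IrrP n" using TT by (auto simp: TT_def)
    have f: "finite T" "finite T'" using s finite_IrrP[OF n] finite_subset by auto
    have m: "T \<subseteq> MI" "T' \<subseteq> MI" using s by (auto simp: IrrP_def)
    show "T = T'" by (rule prod_MI_inj[OF m f eq])
  qed
  show ?thesis unfolding count_CarmSet CarmSet_eq[OF n] using card_image[OF inj] by simp
qed

lemma subsets_in_TT:
  assumes "n = l * m" "m dvd n" "m < n" "n \<ge> 1"
  shows "{S. S \<subseteq> (Irr m :: 'a::{finite,field} poly set) \<and> card S = l} \<subseteq> TT n"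
proof
  fix S :: "'a poly set" assume "S \<in> {S. S \<subseteq> Irr m \<and> card S = l}"
  then have S: "S \<subseteq> Irr m" "card S = l" by auto
  have finS: "finite S" using S(1) finite_Irr finite_subset by blast
  have "(\<Sum>P\<in>S. degree P) = (\<Sum>P\<in>S. m)" using S(1) by (intro sum.cong) (auto simp: Irr_def)
  then have "(\<Sum>P\<in>S. degree P) = n" using S(2) assms(1) by simp
  moreover have "S \<subseteq> IrrP n" using S(1) assms(2,3) by (auto simp: Irr_def IrrP_def)
  ultimately show "S \<in> TT n" by (simp add: TT_def)
qed

lemma count_ge_choose:
  assumes "n = l * m" "m dvd n" "m < n" "n \<ge> 1"
  shows "carmichael_count TYPE('a::{finite,field}) n \<ge> card (Irr m :: 'a poly set) choose l"
proof -
  have "card (Irr m :: 'a poly set) choose l = card {S. S \<subseteq> (Irr m :: 'a poly set) \<and> card S = l}"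
    using n_subsets[OF finite_Irr[of m, where 'a='a], of l] by simp
  also have "\<dots> \<le> card (TT n :: 'a poly set set)"
    using subsets_in_TT[OF assms] TT_finite assms(4) by (intro card_mono) auto
  finally show ?thesis using count_TT[OF assms(4), where 'a='a] by simp
qed


lemma Irr_le:
  assumes d: "d \<ge> 1"
  shows "d * card (Irr d :: 'a::{finite,field} poly set) \<le> card (UNIV :: 'a set) ^ d"
proof -
  have "d * card (Irr d :: 'a poly set) \<le> (\<Sum>e\<in>{e. e dvd d}. e * card (Irr e :: 'a poly set))"
    using d by (intro member_le_sum) auto
  then show ?thesis using gauss[OF d, where 'a='a] by simp
qed

lemma geom_bound: "(q::nat) \<ge> 2 \<Longrightarrow> (\<Sum>d\<in>{1..k}. q ^ d) + 2 \<le> 2 * q ^ k"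
proof (induction k)
  case 0 then show ?case by simp
next
  case (Suc k)
  have e: "(\<Sum>d\<in>{1..Suc k}. q ^ d) = (\<Sum>d\<in>{1..k}. q ^ d) + q ^ Suc k" by simp
  have "2 * q ^ k \<le> q * q ^ k" using Suc.prems by (intro mult_le_mono1) 
  then have "2 * q ^ k \<le> q ^ Suc k" by simp
  then show ?case unfolding e using Suc.IH[OF Suc.prems] by linarith
qed

lemma proper_div_le: "(d::nat) dvd m \<Longrightarrow> d \<noteq> m \<Longrightarrow> m \<ge> 1 \<Longrightarrow> d \<in> {1..m div 2}"
proof -
  assume a: "d dvd m" "d \<noteq> m" "m \<ge> 1"
  then obtain e where e: "m = d * e" by blast
  have "e \<noteq> 0" "d \<noteq> 0" using e a(3) by auto
  moreover have "e \<noteq> 1" using e a(2) by auto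
  ultimately have "e \<ge> 2" by simp
  then have "d * 2 \<le> m" using e by (metis mult_le_mono2)
  then show ?thesis using \<open>d \<noteq> 0\<close> by auto
qed

lemma Irr_lower:
  assumes m: "m \<ge> 2"
  shows "card (UNIV :: 'a::{finite,field} set) ^ m + 2
     \<le> m * card (Irr m :: 'a poly set) + 2 * card (UNIV :: 'a set) ^ (m div 2)"
proof -
  let ?q = "card (UNIV :: 'a set)"
  let ?D = "{d. d dvd m}"
  let ?I = "\<lambda>d. card (Irr d :: 'a poly set)"
  have m1: "m \<ge> 1" using m by simp
  have finD: "finite ?D" using m1 by simp
  have "?q ^ m = (\<Sum>d\<in>?D. d * ?I d)" using gauss[OF m1, where 'a='a] by simp
  also have "\<dots> = m * ?I m + (\<Sum>d\<in>?D - {m}. d * ?I d)"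
    using finD by (subst sum.remove[of _ m]) auto
  also have "(\<Sum>d\<in>?D - {m}. d * ?I d) \<le> (\<Sum>d\<in>?D - {m}. ?q ^ d)"
  proof (rule sum_mono)
    fix d assume "d \<in> ?D - {m}"
    then have "d \<ge> 1" using m1 by (auto intro: Suc_leI simp: dvd_pos_nat)
    then show "d * ?I d \<le> ?q ^ d" by (rule Irr_le)
  qed
  also have "\<dots> \<le> (\<Sum>d\<in>{1..m div 2}. ?q ^ d)"
  proof -
    have "?D - {m} \<subseteq> {1..m div 2}" using proper_div_le m1 by blast
    then show ?thesis by (intro sum_mono2) auto
  qed
  finally have "?q ^ m \<le> m * ?I m + (\<Sum>d\<in>{1..m div 2}. ?q ^ d)" by simp
  moreover have "(\<Sum>d\<in>{1..m div 2}. ?q ^ d) + 2 \<le> 2 * ?q ^ (m div 2)"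
    using geom_bound q_ge2[where 'a='a] by blast
  ultimately show ?thesis by simp
qed

lemma pow_half_bound:
  fixes q m :: nat
  assumes q: "q \<ge> 2" and m: "m \<ge> 2"
  shows "4 * q ^ (m div 2) \<le> q ^ m + 4"
proof (cases "m = 2")
  case True
  have "4 * q \<le> q * q + 4"
  proof (cases "q \<le> 3")
    case True
    then have "q = 2 \<or> q = 3" using q by auto
    then show ?thesis by auto
  next
    case False
    then have q4: "4 \<le> q" by simp
    have "4 * q \<le> q * q" using mult_le_mono1[OF q4, of q] by simp
    then show ?thesis by linarith
  qed
  then show ?thesis using True by (simp add: power2_eq_square)
next
  case False
  then have m3: "m \<ge> 3" using m by simp
  have "m - m div 2 \<ge> 2" using m3 by linarith
  then have "q ^ (m - m div 2) \<ge> q ^ 2" using q by (intro power_increasing) auto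
  moreover have "q ^ 2 \<ge> 4" using q by (metis power2_eq_square mult_le_mono numeral_times_numeral semiring_norm(12) num_double)
  ultimately have h: "q ^ (m - m div 2) \<ge> 4" by simp
  have "q ^ m = q ^ (m div 2) * q ^ (m - m div 2)"
    by (simp flip: power_add)
  also have "\<dots> \<ge> q ^ (m div 2) * 4" using h by simp
  finally show ?thesis by simp
qed

lemma Irr_lower2:
  assumes m: "m \<ge> 2"
  shows "card (UNIV :: 'a::{finite,field} set) ^ m \<le> 2 * m * card (Irr m :: 'a poly set)"
  using Irr_lower[OF m, where 'a='a] pow_half_bound[OF q_ge2[where 'a='a] m] by simp


lemma div1: "{d::nat. d dvd 1} = {1}" by auto

lemma div2: "{d::nat. d dvd 2} = {1,2}"
proof (intro equalityI subsetI)
  fix d :: nat assume "d \<in> {d. d dvd 2}"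
  then have "d dvd 2" by simp
  then have "d \<le> 2" "d > 0" using dvd_imp_le[of d 2] dvd_pos_nat[of 2 d] by auto
  then have "d \<in> {1,2}" by auto
  then show "d \<in> {1,2}" .
qed auto

lemma div3: "{d::nat. d dvd 3} = {1,3}"
proof (intro equalityI subsetI)
  fix d :: nat assume "d \<in> {d. d dvd 3}"
  then have "d dvd 3" by simp
  then have "d \<le> 3" "d > 0" using dvd_imp_le[of d 3] dvd_pos_nat[of 3 d] by auto
  then have "d \<in> {1,2,3}" by auto
  then show "d \<in> {1,3}" using \<open>d dvd 3\<close> by auto
qed auto

context
  assumes q2: "card (UNIV :: 'a::{finite,field} set) = 2"
begin

lemma I1_2: "card (Irr 1 :: 'a poly set) = 2"
  using gauss[of 1, where 'a='a] q2 by (simp add: div1)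

lemma I2_1: "card (Irr 2 :: 'a poly set) = 1"
  using gauss[of 2, where 'a='a] q2 I1_2 by (simp add: div2)

lemma I3_2: "card (Irr 3 :: 'a poly set) = 2"
  using gauss[of 3, where 'a='a] q2 I1_2 by (simp add: div3)

lemma TT9: "TT 9 = ({} :: 'a poly set set)"
proof (rule ccontr)
  assume "TT 9 \<noteq> ({} :: 'a poly set set)"
  then obtain T :: "'a poly set" where T: "T \<in> TT 9" by blast
  have sub: "T \<subseteq> IrrD 3"
  proof
    fix P assume "P \<in> T"
    then have P: "P \<in> MI" "degree P dvd 9" "degree P < 9" using T by (auto simp: TT_def IrrP_def)
    have "degree P > 0" using P(2) dvd_pos_nat[of 9 "degree P"] by auto
    then have "degree P \<in> {1,2,3,4,5,6,7,8}" using P(3) by auto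
    then have "degree P dvd 3" using P(2) by auto
    then show "P \<in> IrrD 3" using P(1) by (simp add: IrrD_def)
  qed
  have "(\<Sum>P\<in>T. degree P) \<le> (\<Sum>P\<in>(IrrD 3 :: 'a poly set). degree P)"
    using sub finite_IrrD[of 3, where 'a='a] by (intro sum_mono2) auto
  also have "\<dots> = 8" using sumdeg_eq[of 3, where 'a='a] q2 by simp
  finally show False using T by (simp add: TT_def)
qed

lemma IrrP4: "IrrP 4 = (IrrD 2 :: 'a poly set)"
proof (intro equalityI subsetI)
  fix P :: "'a poly" assume "P \<in> IrrP 4"
  then have P: "P \<in> MI" "degree P dvd 4" "degree P < 4" by (auto simp: IrrP_def)
  have "degree P > 0" using P(2) dvd_pos_nat[of 4 "degree P"] by auto
  then have "degree P \<in> {1,2,3}" using P(3) by auto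
  then have "degree P dvd 2" using P(2) by auto
  then show "P \<in> IrrD 2" using P(1) by (simp add: IrrD_def)
next
  fix P :: "'a poly" assume "P \<in> IrrD 2"
  then have P: "P \<in> MI" "degree P dvd 2" by (auto simp: IrrD_def)
  have "degree P \<le> 2" using P(2) dvd_imp_le[of "degree P" 2] by auto
  moreover have "degree P dvd 4" using P(2) dvd_trans[of "degree P" 2 4] by simp
  ultimately show "P \<in> IrrP 4" using P(1) by (simp add: IrrP_def)
qed

lemma TT4: "TT 4 = {IrrD 2 :: 'a poly set}"
proof (intro equalityI subsetI)
  fix T :: "'a poly set" assume T: "T \<in> TT 4"
  then have sub: "T \<subseteq> IrrD 2" and s: "(\<Sum>P\<in>T. degree P) = 4" by (auto simp: TT_def IrrP4)
  have fin: "finite (IrrD 2 :: 'a poly set)" using finite_IrrD[of 2] by simp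
  have tot: "(\<Sum>P\<in>(IrrD 2 :: 'a poly set). degree P) = 4" using sumdeg_eq[of 2, where 'a='a] q2 by simp
  have "T = IrrD 2"
  proof (rule ccontr)
    assume "T \<noteq> IrrD 2"
    then obtain x where x: "x \<in> IrrD 2" "x \<notin> T" using sub by blast
    have "(\<Sum>P\<in>(IrrD 2 :: 'a poly set). degree P) = (\<Sum>P\<in>T. degree P) + (\<Sum>P\<in>IrrD 2 - T. degree P)"
      using sum.subset_diff[OF sub fin, of degree] by (simp add: add.commute)
    moreover have "(\<Sum>P\<in>IrrD 2 - T. degree P) \<ge> degree x"
      using x fin by (intro member_le_sum) auto
    moreover have "degree x > 0" using MI_deg_pos[of x] x(1) by (simp add: IrrD_def)
    ultimately show False using tot s by simp
  qed
  then show "T \<in> {IrrD 2}" by simp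
next
  fix T :: "'a poly set" assume "T \<in> {IrrD 2}"
  then show "T \<in> TT 4" using sumdeg_eq[of 2, where 'a='a] q2 by (simp add: TT_def IrrP4)
qed

lemma C4: "carmichael_count TYPE('a) 4 = 1"
  using count_TT[of 4, where 'a='a] TT4 by simp

lemma C9: "carmichael_count TYPE('a) 9 = 0"
  using count_TT[of 9, where 'a='a] TT9 by simp

lemma C6: "carmichael_count TYPE('a) 6 \<ge> 2"
proof -
  obtain a b :: "'a poly" where ab: "a \<in> Irr 1" "b \<in> Irr 1" "a \<noteq> b"
  proof -
    have "card (Irr 1 :: 'a poly set) = 2" by (rule I1_2)
    then obtain a b :: "'a poly" where "Irr 1 = {a, b}" "a \<noteq> b" by (auto simp: card_2_iff)
    then show ?thesis using that by blast
  qed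
  obtain P2 :: "'a poly" where P2: "P2 \<in> Irr 2"
    using I2_1 by (metis card.empty ex_in_conv zero_neq_one)
  obtain P3 :: "'a poly" where P3: "P3 \<in> Irr 3"
    using I3_2 by (metis card.empty ex_in_conv zero_neq_numeral)
  have deg: "degree a = 1" "degree b = 1" "degree P2 = 2" "degree P3 = 3"
    using ab P2 P3 by (auto simp: Irr_def)
  have MIs: "a \<in> MI" "b \<in> MI" "P2 \<in> MI" "P3 \<in> MI" using ab P2 P3 by (auto simp: Irr_def)
  have inT: "{x, P2, P3} \<in> TT 6" if "x \<in> MI" "degree x = 1" for x :: "'a poly"
  proof -
    have d: "x \<noteq> P2" "x \<noteq> P3" "P2 \<noteq> P3" using that deg by auto
    have "(\<Sum>P\<in>{x, P2, P3}. degree P) = 6" using d that deg by simp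
    moreover have "{x, P2, P3} \<subseteq> IrrP 6" using that deg MIs by (auto simp: IrrP_def)
    ultimately show ?thesis by (simp add: TT_def)
  qed
  have ne: "{a, P2, P3} \<noteq> {b, P2, P3}"
  proof
    assume "{a, P2, P3} = {b, P2, P3}"
    then have "a \<in> {b, P2, P3}" by blast
    then show False using ab(3) deg by auto
  qed
  have "{{a, P2, P3}, {b, P2, P3}} \<subseteq> (TT 6 :: 'a poly set set)"
    using inT MIs deg by auto
  then have "card {{a, P2, P3}, {b, P2, P3}} \<le> card (TT 6 :: 'a poly set set)"
    using TT_finite[of 6, where 'a='a] by (intro card_mono) auto
  then have "card (TT 6 :: 'a poly set set) \<ge> 2" using ne by simp
  then show ?thesis using count_TT[of 6, where 'a='a] by simp
qed

end


lemma pow2_big: "(m::nat) \<ge> 7 \<Longrightarrow> 2 * m ^ 2 < 2 ^ m"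
proof (induction m rule: nat_induct_at_least)
  case base then show ?case by simp
next
  case (Suc m)
  have "7 * m \<le> m * m" using Suc.hyps by (intro mult_le_mono1)
  then have "4 * m + 2 \<le> 2 * (m * m)" using Suc.hyps by linarith
  then have "4 * m + 2 \<le> 2 * m ^ 2" by (simp add: power2_eq_square)
  then have "2 * Suc m ^ 2 = 2 * m ^ 2 + 4 * m + 2" by (simp add: power2_eq_square algebra_simps)
  also have "\<dots> < 2 ^ m + 2 ^ m" using Suc.IH \<open>4 * m + 2 \<le> 2 * m ^ 2\<close> by linarith
  finally show ?case by simp
qed

lemma pow_half_bound3:
  fixes q m :: nat
  assumes q: "q \<ge> 2" and m3: "m \<ge> 3"
  shows "4 * q ^ (m div 2) \<le> q ^ m"
proof -
  have "m - m div 2 \<ge> 2" using m3 by linarith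
  then have "q ^ (m - m div 2) \<ge> q ^ 2" using q by (intro power_increasing) auto
  moreover have "q ^ 2 \<ge> 2 ^ 2" using q by (intro power_mono) auto
  ultimately have h: "q ^ (m - m div 2) \<ge> 4" by simp
  have "q ^ m = q ^ (m div 2) * q ^ (m - m div 2)"
    by (simp flip: power_add)
  also have "\<dots> \<ge> q ^ (m div 2) * 4" using h by simp
  finally show ?thesis by simp
qed

lemma caseB:
  fixes q m l :: nat
  assumes q: "q \<ge> 2" and m: "m \<ge> 2" and l: "prime l" "l \<le> m"
    and ineq: "q ^ m + 2 \<le> m * l + 2 * q ^ (m div 2)"
    and ev: "even m \<Longrightarrow> l = 2"
  shows "q = 2 \<and> ((m = 2 \<and> l = 2) \<or> (m = 3 \<and> (l = 2 \<or> l = 3)))"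
proof (cases "m = 2")
  case True
  then have l2: "l = 2" using ev by simp
  have "q ^ 2 + 2 \<le> 4 + 2 * q" using ineq True l2 by simp
  then have "q \<le> 2"
  proof -
    assume h: "q ^ 2 + 2 \<le> 4 + 2 * q"
    show "q \<le> 2"
    proof (rule ccontr)
      assume "\<not> q \<le> 2"
      then have "q \<ge> 3" by simp
      then have "3 * q \<le> q * q" by (intro mult_le_mono1)
      moreover have "q * q + 2 \<le> 4 + 2 * q" using h by (simp add: power2_eq_square)
      ultimately show False using \<open>q \<ge> 3\<close> by linarith
    qed
  qed
  then show ?thesis using q True l2 by simp
next
  case False
  then have m3: "m \<ge> 3" using m by simp
  have "4 * q ^ (m div 2) \<le> q ^ m" by (rule pow_half_bound3[OF q m3])
  then have h1: "q ^ m + 4 \<le> 2 * (m * l)" using ineq by linarith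
  have "m * l \<le> m * m" using mult_le_mono2[OF l(2)] .
  then have "q ^ m + 4 \<le> 2 * (m * m)" using h1 by linarith
  then have h2: "q ^ m + 4 \<le> 2 * m ^ 2" by (simp add: power2_eq_square)
  have "2 ^ m \<le> q ^ m" using q by (intro power_mono) auto
  then have "2 ^ m < 2 * m ^ 2" using h2 by simp
  then have m6: "m \<le> 6" using pow2_big[of m] by (cases "m \<ge> 7") auto
  have "q ^ 3 \<le> q ^ m" using q m3 by (intro power_increasing) auto
  moreover have "2 * m ^ 2 \<le> 72"
  proof -
    have "m * m \<le> 6 * 6" using mult_le_mono[OF m6 m6] .
    then show ?thesis by (simp add: power2_eq_square)
  qed
  ultimately have "q ^ 3 \<le> 72" using h2 by simp
  then have q4: "q \<le> 4"
  proof -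
    assume "q ^ 3 \<le> 72"
    show "q \<le> 4"
    proof (rule ccontr)
      assume "\<not> q \<le> 4"
      then have "5 ^ 3 \<le> q ^ 3" by (intro power_mono) auto
      then show False using \<open>q ^ 3 \<le> 72\<close> by simp
    qed
  qed
  have l2: "l \<ge> 2" using l(1) prime_ge_2_nat by blast
  have mc: "m = 3 \<or> m = 4 \<or> m = 5 \<or> m = 6" using m3 m6 by auto
  have qc: "q = 2 \<or> q = 3 \<or> q = 4" using q q4 by auto
  have l3: "m = 3 \<Longrightarrow> l = 2 \<or> l = 3" using l(2) l2 by presburger
  from mc qc show ?thesis
  proof (elim disjE)
  qed (use ineq ev l(2) l2 l3 in simp_all)
qed


lemma lm_small:
  fixes l m k :: nat
  assumes "l * m = k" "l \<ge> 2" "l \<le> m" "k = 9 \<or> k = 4"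
  shows "(k = 9 \<longrightarrow> l = 3 \<and> m = 3) \<and> (k = 4 \<longrightarrow> l = 2 \<and> m = 2)"
proof -
  have "l \<le> 3"
  proof (rule ccontr)
    assume "\<not> l \<le> 3"
    then have "4 \<le> l" "4 \<le> m" using assms(3) by auto
    then have "4 * 4 \<le> l * m" by (intro mult_le_mono)
    then show False using assms(1,4) by auto
  qed
  then have "l = 2 \<or> l = 3" using assms(2) by auto
  then show ?thesis using assms(1,4) by (auto; presburger)
qed

theorem theorem4p5:
  fixes n l q :: nat
  assumes "q = card (UNIV :: 'a::{finite,field} set)"
    and "n > 1" and "\<not> prime n"
    and "prime l" and "l dvd n" and "\<forall>p. prime p \<and> p dvd n \<longrightarrow> l \<le> p"
  shows "(carmichael_count TYPE('a) n = 0 \<longleftrightarrow> (q, n) = (2, 9))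
    \<and> ((q, n) \<noteq> (2, 9) \<longrightarrow>
         (carmichael_count TYPE('a) n = 1 \<longleftrightarrow> (q, n) = (2, 4))
         \<and> real (carmichael_count TYPE('a) n) \<ge> real q ^ n / (2 * real n) ^ l)"
proof -
  note qdef = assms(1)
  define C where "C = carmichael_count TYPE('a) n"
  obtain m where nm: "n = l * m" using assms(5) by blast
  have l2: "l \<ge> 2" using assms(4) prime_ge_2_nat by blast
  have m0: "m \<noteq> 0"
  proof
    assume "m = 0"
    then have "n = 0" using nm by simp
    then show False using assms(2) by simp
  qed
  have m1: "m \<noteq> 1" using nm assms(3,4) by auto
  have m2: "m \<ge> 2" using m0 m1 by simp
  have lm: "l \<le> m"
  proof -
    obtain r where r: "prime r" "r dvd m" using prime_factor_nat[OF m1] by blast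
    have "r dvd n" using r(2) nm by simp
    then have "l \<le> r" using assms(6) r(1) by blast
    moreover have "r \<le> m" using r(2) m0 by (simp add: dvd_imp_le)
    ultimately show ?thesis by simp
  qed
  have ev: "even m \<Longrightarrow> l = 2"
  proof -
    assume "even m"
    then have "2 dvd n" using nm by simp
    then have "l \<le> 2" using assms(6) by auto
    then show "l = 2" using l2 by simp
  qed
  have mdvd: "m dvd n" using nm by simp
  have mlt: "m < n" using nm l2 m2 by simp
  have n1: "n \<ge> 1" using assms(2) by simp
  define I where "I = card (Irr m :: 'a poly set)"
  have Cge: "C \<ge> I choose l" unfolding C_def I_def
    using count_ge_choose[OF nm mdvd mlt n1, where 'a='a] .
  have low2: "q ^ m \<le> 2 * m * I" unfolding qdef I_def using Irr_lower2[OF m2, where 'a='a] .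
  have low: "q ^ m + 2 \<le> m * I + 2 * q ^ (m div 2)" unfolding qdef I_def using Irr_lower[OF m2, where 'a='a] .
  have up: "m * I \<le> q ^ m" unfolding qdef I_def using Irr_le[of m, where 'a='a] m2 by simp
  have q2: "q \<ge> 2" unfolding qdef by (rule q_ge2)
  show ?thesis
  proof (cases "I > l")
    case True
    have lpos: "real l > 0" using l2 by simp
    have mpos: "real m > 0" using m2 by simp
    have eqb: "real q ^ n / (2 * real n) ^ l = (real q ^ m / (2 * real m * real l)) ^ l"
    proof -
      have A: "real q ^ n = (real q ^ m) ^ l" unfolding nm by (subst mult.commute) (rule power_mult)
      have B: "2 * real n = 2 * real m * real l" unfolding nm by simp
      show ?thesis by (simp only: A B power_divide)
    qed
    have "real q ^ m \<le> 2 * real m * real I" using low2 by (metis of_nat_le_iff of_nat_mult of_nat_numeral of_nat_power)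
    then have "real q ^ m / (2 * real m * real l) \<le> (2 * real m * real I) / (2 * real m * real l)"
      using lpos mpos by (intro divide_right_mono) auto
    also have "\<dots> = real I / real l" using mpos by simp
    finally have b1: "real q ^ m / (2 * real m * real l) \<le> real I / real l" .
    have b2: "(real q ^ m / (2 * real m * real l)) ^ l \<le> (real I / real l) ^ l"
      using b1 by (intro power_mono) auto
    have b3: "(real I / real l) ^ l \<le> real (I choose l)"
      using binomial_ge_n_over_k_pow_k[of l I] True by simp
    have b4: "real (I choose l) \<le> real C" using Cge by simp
    have bound: "real q ^ n / (2 * real n) ^ l \<le> real C" using eqb b2 b3 b4 by linarith
    have "real I / real l > 1" using True lpos by simp
    then have "(real I / real l) ^ l > 1" using l2 by (intro one_less_power) auto
    then have "real C > 1" using b3 b4 by linarith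
    then have C2: "C \<ge> 2" by simp
    have n9: "(q, n) \<noteq> (2, 9)"
    proof
      assume "(q, n) = (2, 9)"
      then have qn: "q = 2" "n = 9" by auto
      then have "l = 3 \<and> m = 3" using lm_small[of l m n] nm l2 lm by auto
      then have "3 * I \<le> 8" using up qn by simp
      then show False using True \<open>l = 3 \<and> m = 3\<close> by simp
    qed
    have n4: "(q, n) \<noteq> (2, 4)"
    proof
      assume "(q, n) = (2, 4)"
      then have qn: "q = 2" "n = 4" by auto
      then have "l = 2 \<and> m = 2" using lm_small[of l m n] nm l2 lm by auto
      then have "2 * I \<le> 4" using up qn by simp
      then show False using True \<open>l = 2 \<and> m = 2\<close> by simp
    qed
    show ?thesis using C2 n9 n4 bound unfolding C_def by auto
  next
    case False
    then have "m * I \<le> m * l" by simp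
    then have ineq: "q ^ m + 2 \<le> m * l + 2 * q ^ (m div 2)" using low by linarith
    have cB: "q = 2 \<and> ((m = 2 \<and> l = 2) \<or> (m = 3 \<and> (l = 2 \<or> l = 3)))"
      using caseB[OF q2 m2 assms(4) lm ineq ev] .
    have qa: "card (UNIV :: 'a set) = 2" using cB qdef by simp
    have nc: "(n = 4 \<and> l = 2) \<or> (n = 6 \<and> l = 2) \<or> (n = 9 \<and> l = 3)" using cB nm by auto
    then show ?thesis
    proof (elim disjE conjE)
      assume n: "n = 4" "l = 2"
      have "C = 1" unfolding C_def n(1) using C4[OF qa] .
      moreover have "real q ^ n / (2 * real n) ^ l \<le> 1" using n cB by simp
      ultimately show ?thesis using cB n unfolding C_def by auto
    next
      assume n: "n = 6" "l = 2"
      have "C \<ge> 2" unfolding C_def n(1) using C6[OF qa] .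
      moreover have "real q ^ n / (2 * real n) ^ l \<le> 1" using n cB by simp
      ultimately show ?thesis using cB n unfolding C_def by auto
    next
      assume n: "n = 9" "l = 3"
      have "C = 0" unfolding C_def n(1) using C9[OF qa] .
      then show ?thesis using cB n unfolding C_def by auto
    qed
  qed
qed

end
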